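(* Let $r>0$. For $i=1,\dots,K$ let $f_i:\mathbb{R}^{n_i}\to\mathbb{R}$ be convex with convex feasible set $\mathcal{X}_i$, and let $\mathcal{A}_i$ be a $g_i(k)$-bounded algorithm for $\min_{x\in\mathcal{X}_i}f_i(x)$ with $g_i(k)=\beta_i/k^r$, $\beta_i>0$. Run the F-LCB algorithm with these base algorithms (deterministic oracles). Then for all $\tau\in\{1,\dots,T\}$: (i) if $r\in(0,1)$, $R_O(\tau)\le O\big((\sum_{i=1}^K\beta_i^{1/r})^{r}\tau^{1-r}\big)$; (ii) if $r=1$, $R_O(\tau)\le O\big(\sum_{i=1}^K\beta_i\log\tau\big)$; (iii) if $r>1$, $R_O(\tau)\le O\big(\sum_{i=1}^K\beta_i\big)$.
   Context: An algorithm $x_{k+1}=\mathcal{A}(x_0,\mathcal{O}(x_0),\dots,x_k,\mathcal{O}(x_k))$ for $\min_{x\in\mathcal{X}}f(x)$ is $g(k)$-bounded if $f(x_k)-f(x^* )\le g(k)$ for every $k\in\mathbb{N}$, where $x^*$ is a minimizer. F-LCB algorithm: start from initial points $x_0^{i}$; run one step of each $\mathcal{A}_i$ to get $x_1^i$, set $k_i=1$ and $LCB_i=f_i(x_{1}^{i})-g_i(1)$. For $t=1,\dots,T$: choose $i_t=\arg\min_{1\le i\le K}LCB_i$; run one more step of $\mathcal{A}_{i_t}$ to obtain $x^{i_t}_{k_{i_t}+1}$; set $LCB_{i_t}=f_{i_t}(x^{i_t}_{k_{i_t}+1})-g_{i_t}(k_{i_t}+1)$ (other indices unchanged); increase $k_{i_t}$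 by one. Let $k_{i,t}$ be the number of updates of arm $i$ by time $t$ and $x^{i,k}$ the $k$-th iterate of arm $i$. The regret is $R_O(\tau)=\sum_{t=1}^{\tau}\big[f_{i_t}(x^{i_t,k_{i_t,t}})-f^*\big]$ with $f^*=\min_i\min_{x\in\mathcal{X}_i}f_i(x)$. *)

theory Defs
  imports "HOL-Analysis.Analysis"
begin

text \<open>Points of R^n are represented as functions nat \<Rightarrow> real vanishing from index n on.\<close>

definition Rn :: "nat \<Rightarrow> (nat \<Rightarrow> real) set" where
  "Rn n = {x. \<forall>j\<ge>n. x j = 0}"

definition convex_set_Rn :: "(nat \<Rightarrow> real) set \<Rightarrow> bool" where
  "convex_set_Rn S \<longleftrightarrow> (\<forall>x\<in>S. \<forall>y\<in>S. \<forall>u::real. 0 \<le> u \<and> u \<le> 1 \<longrightarrow>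
      (\<lambda>j. u * x j + (1 - u) * y j) \<in> S)"

definition convex_fun_Rn :: "(nat \<Rightarrow> real) set \<Rightarrow> ((nat \<Rightarrow> real) \<Rightarrow> real) \<Rightarrow> bool" where
  "convex_fun_Rn S f \<longleftrightarrow> (\<forall>x\<in>S. \<forall>y\<in>S. \<forall>u::real. 0 \<le> u \<and> u \<le> 1 \<longrightarrow>
      f (\<lambda>j. u * x j + (1 - u) * y j) \<le> u * f x + (1 - u) * f y)"

fun alg_hist :: "(('x \<times> 'o) list \<Rightarrow> 'x) \<Rightarrow> ('x \<Rightarrow> 'o) \<Rightarrow> 'x \<Rightarrow> nat \<Rightarrow> 'x list" where
  "alg_hist A Orc x0 0 = [x0]"
| "alg_hist A Orc x0 (Suc k) =
     (let xs = alg_hist A Orc x0 k in xs @ [A (map (\<lambda>x. (x, Orc x)) xs)])"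

definition alg_iter :: "(('x \<times> 'o) list \<Rightarrow> 'x) \<Rightarrow> ('x \<Rightarrow> 'o) \<Rightarrow> 'x \<Rightarrow> nat \<Rightarrow> 'x" where
  "alg_iter A Orc x0 k = last (alg_hist A Orc x0 k)"

definition g_bounded :: "('x \<Rightarrow> real) \<Rightarrow> 'x set \<Rightarrow> (nat \<Rightarrow> real) \<Rightarrow> (nat \<Rightarrow> 'x) \<Rightarrow> bool" where
  "g_bounded f X g xs \<longleftrightarrow>
     (\<exists>xstar\<in>X. (\<forall>y\<in>X. f xstar \<le> f y) \<and>
        (\<forall>k. xs k \<in> X) \<and> (\<forall>k\<ge>1. f (xs k) - f xstar \<le> g k))"

text \<open>F-LCB bookkeeping. sel t (t >= 1) is the arm chosen at round t.
  flcb_cnt sel t i = k_{i,t}: number of updates of arm i by time t (initial step counted).\<close>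

fun flcb_cnt :: "(nat \<Rightarrow> nat) \<Rightarrow> nat \<Rightarrow> nat \<Rightarrow> nat" where
  "flcb_cnt sel 0 i = 1"
| "flcb_cnt sel (Suc t) i = flcb_cnt sel t i + (if sel (Suc t) = i then 1 else 0)"

definition flcb_lcb :: "(nat \<Rightarrow> 'x \<Rightarrow> real) \<Rightarrow> (nat \<Rightarrow> nat \<Rightarrow> real) \<Rightarrow> (nat \<Rightarrow> nat \<Rightarrow> 'x)
      \<Rightarrow> (nat \<Rightarrow> nat) \<Rightarrow> nat \<Rightarrow> nat \<Rightarrow> real" where
  "flcb_lcb f g x sel t i = f i (x i (flcb_cnt sel t i)) - g i (flcb_cnt sel t i)"

definition flcb_run :: "nat \<Rightarrow> (nat \<Rightarrow> 'x \<Rightarrow> real) \<Rightarrow> (nat \<Rightarrow> nat \<Rightarrow> real) \<Rightarrow> (nat \<Rightarrow> nat \<Rightarrow> 'x)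
      \<Rightarrow> nat \<Rightarrow> (nat \<Rightarrow> nat) \<Rightarrow> bool" where
  "flcb_run K f g x T sel \<longleftrightarrow>
     (\<forall>t\<in>{1..T}. sel t < K \<and> (\<forall>j<K. flcb_lcb f g x sel (t - 1) (sel t) \<le> flcb_lcb f g x sel (t - 1) j))"

definition fstar :: "nat \<Rightarrow> (nat \<Rightarrow> 'x \<Rightarrow> real) \<Rightarrow> (nat \<Rightarrow> 'x set) \<Rightarrow> real" where
  "fstar K f X = Min {Inf (f i ` X i) | i. i < K}"

definition flcb_regret :: "nat \<Rightarrow> (nat \<Rightarrow> 'x \<Rightarrow> real) \<Rightarrow> (nat \<Rightarrow> 'x set) \<Rightarrow> (nat \<Rightarrow> nat \<Rightarrow> 'x)
      \<Rightarrow> (nat \<Rightarrow> nat) \<Rightarrow> nat \<Rightarrow> real" where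
  "flcb_regret K f X x sel \<tau> =
     (\<Sum>t=1..\<tau>. f (sel t) (x (sel t) (flcb_cnt sel t (sel t))) - fstar K f X)"

end

theory Submission
  imports Defs
begin


lemma tan_lt1:
  fixes r m :: real
  assumes "0 < r" "r < 1" "m > 0"
  shows "m powr (1-r) + (1-r) / (m+1) powr r \<le> (m+1) powr (1-r)"
proof -
  have Y: "m powr (1-r) * (m+1) powr r \<le> (1-r)*m + r*(m+1)"
    using Youngs_inequality_0[of "1-r" r m "m+1"] assms by simp
  have P: "(m+1) powr (1-r) * (m+1) powr r = m+1"
    using assms by (simp add: powr_add[symmetric])
  have pos: "(m+1) powr r > 0" using assms by simp
  have "(m powr (1-r) + (1-r) / (m+1) powr r) * (m+1) powr r = m powr (1-r) * (m+1) powr r + (1-r)"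
    using pos by (simp add: field_simps)
  also have "\<dots> \<le> (m+1) powr (1-r) * (m+1) powr r" using Y P by (simp add: algebra_simps)
  finally show ?thesis using pos by (simp add: mult_le_cancel_right)
qed

lemma tan_gt1:
  fixes r m :: real
  assumes "1 < r" "m > 0"
  shows "(m+1) powr (1-r) + (r-1) / (m+1) powr r \<le> m powr (1-r)"
proof -
  have Y: "m powr ((r-1)/r) * (m+r) powr (1/r) \<le> ((r-1)/r)*m + (1/r)*(m+r)"
    using Youngs_inequality_0[of "(r-1)/r" "1/r" m "m+r"] assms by (simp add: field_simps)
  have "((r-1)/r)*m + (1/r)*(m+r) = m + 1" using assms by (simp add: field_simps)
  with Y have Y2: "m powr ((r-1)/r) * (m+r) powr (1/r) \<le> m + 1" by simp
  have "(m powr ((r-1)/r) * (m+r) powr (1/r)) powr r \<le> (m+1) powr r"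
    using Y2 assms by (intro powr_mono2) auto
  moreover have "(m powr ((r-1)/r) * (m+r) powr (1/r)) powr r = m powr (r-1) * (m+r)"
    using assms by (simp add: powr_mult powr_powr)
  ultimately have Z: "m powr (r-1) * (m+r) \<le> (m+1) powr r" by simp
  have pos: "(m+1) powr r > 0" "m powr (r-1) > 0" using assms by auto
  have e1: "(m+1) powr (1-r) = (m+1) / (m+1) powr r"
    using assms by (simp add: powr_diff)
  have e2: "m powr (1-r) = m / m powr r"
    using assms by (simp add: powr_diff)
  have e3: "m powr r = m * m powr (r-1)"
    using assms by (simp add: powr_diff)
  have "(m+1) powr (1-r) + (r-1) / (m+1) powr r = (m + r) / (m+1) powr r"
  proof -
    have "(m+1) powr r * (m+1) powr (1-r) = m+1" using assms by (simp add: powr_add[symmetric])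
    then show ?thesis using pos by (simp add: field_simps)
  qed
  also have "\<dots> \<le> 1 / m powr (r-1)"
    using Z pos by (simp add: field_simps)
  also have "\<dots> = m powr (1-r)" using assms pos by (simp add: e2 e3)
  finally show ?thesis .
qed

lemma aux_div: "(a::real) \<noteq> 0 \<Longrightarrow> (a / P) / a = 1 / P"
  by (cases "P = 0") (auto simp: field_simps)

definition Hr :: "real \<Rightarrow> nat \<Rightarrow> real" where
  "Hr r m = (\<Sum>k=1..m. 1 / real k powr r)"

lemma Hr_Suc: "Hr r (Suc m) = Hr r m + 1 / real (Suc m) powr r"
  by (simp add: Hr_def)

lemma Hr_lt1:
  assumes "0 < r" "r < 1"
  shows "Hr r m \<le> real m powr (1-r) / (1-r)"
proof (induction m)
  case 0 then show ?case by (simp add: Hr_def)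
next
  case (Suc m)
  show ?case
  proof (cases "m = 0")
    case True then show ?thesis using assms by (simp add: Hr_def)
  next
    case False
    have t: "real m powr (1-r) + (1-r) / (real m+1) powr r \<le> (real m+1) powr (1-r)"
      using tan_lt1[of r "real m"] assms False by simp
    have "Hr r (Suc m) \<le> real m powr (1-r) / (1-r) + 1 / (real m + 1) powr r"
      using Suc by (simp add: Hr_Suc add.commute)
    also have "\<dots> = (real m powr (1-r) + (1-r) / (real m+1) powr r) / (1-r)"
      using assms by (simp add: field_simps)
    also have "\<dots> \<le> (real m+1) powr (1-r) / (1-r)"
      using t assms by (intro divide_right_mono) auto
    finally show ?thesis by (simp add: add.commute)
  qed
qed

lemma Hr_gt1_aux:
  assumes "1 < r"
  shows "Hr r (Suc m) \<le> r/(r-1) - real (Suc m) powr (1-r) / (r-1)"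
proof (induction m)
  case 0
  have "r/(r-1) - 1/(r-1) = 1" using assms by (simp add: diff_divide_distrib[symmetric])
  then show ?case by (simp add: Hr_def)
next
  case (Suc m)
  have t: "(real (Suc m)+1) powr (1-r) + (r-1) / (real (Suc m)+1) powr r \<le> real (Suc m) powr (1-r)"
    using tan_gt1[of r "real (Suc m)"] assms by simp
  have "Hr r (Suc (Suc m)) \<le> r/(r-1) - real (Suc m) powr (1-r) / (r-1) + 1 / (real (Suc m) + 1) powr r"
    using Suc by (simp add: Hr_Suc add.commute)
  also have "\<dots> = r/(r-1) - (real (Suc m) powr (1-r) - (r-1) / (real (Suc m)+1) powr r) / (r-1)"
  proof -
    have "r - 1 \<noteq> 0" using assms by simp
    then have h: "((r-1) / (real (Suc m)+1) powr r) / (r-1) = 1 / (real (Suc m)+1) powr r"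
      using aux_div by blast
    have "(real (Suc m) powr (1-r) - (r-1) / (real (Suc m)+1) powr r) / (r-1) = real (Suc m) powr (1-r)/(r-1) - ((r-1) / (real (Suc m)+1) powr r)/(r-1)"
      by (rule diff_divide_distrib)
    then show ?thesis using h by linarith
  qed
  also have "\<dots> \<le> r/(r-1) - (real (Suc m)+1) powr (1-r) / (r-1)"
    using t assms by (simp add: divide_right_mono)
  finally show ?case by (simp add: add.commute)
qed

lemma Hr_gt1:
  assumes "1 < r"
  shows "Hr r m \<le> r/(r-1)"
proof (cases m)
  case 0 then show ?thesis using assms by (simp add: Hr_def)
next
  case (Suc k)
  then show ?thesis using Hr_gt1_aux[OF assms, of k] assms by (smt (verit) divide_nonneg_pos powr_ge_zero)
qed

lemma Hr_1:
  assumes "m \<ge> 1"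
  shows "Hr 1 m \<le> 1 + ln (real m)"
  using assms
proof (induction m rule: dec_induct)
  case base then show ?case by (simp add: Hr_def)
next
  case (step m)
  have "1 / (real m + 1) \<le> ln (real m + 1) - ln (real m)"
  proof -
    have "ln (real m / (real m + 1)) \<le> real m / (real m + 1) - 1"
      using step by (intro ln_le_minus_one) auto
    moreover have "ln (real m / (real m + 1)) = ln (real m) - ln (real m + 1)"
      using step by (simp add: ln_div)
    moreover have "real m / (real m + 1) - 1 = - (1 / (real m + 1))"
      by (simp add: field_simps)
    ultimately show ?thesis by linarith
  qed
  then show ?case using step by (simp add: Hr_Suc add.commute)
qed

lemma young_sum:
  fixes b m :: "nat \<Rightarrow> real" and r \<tau> :: real
  assumes r: "0 < r" "r < 1" and I: "finite I" "I \<noteq> {}"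
    and bpos: "\<And>i. i \<in> I \<Longrightarrow> b i > 0" and mnn: "\<And>i. i \<in> I \<Longrightarrow> m i \<ge> 0"
    and msum: "(\<Sum>i\<in>I. m i) = \<tau>" and tpos: "\<tau> > 0"
  shows "(\<Sum>i\<in>I. b i * m i powr (1-r)) \<le> (\<Sum>i\<in>I. b i powr (1/r)) powr r * \<tau> powr (1-r)"
proof -
  define S where "S = (\<Sum>i\<in>I. b i powr (1/r))"
  have Spos: "S > 0" unfolding S_def using I bpos by (intro sum_pos) (auto, fastforce)
  define M where "M = S powr r * \<tau> powr (1-r)"
  have Mpos: "M > 0" unfolding M_def using Spos tpos by simp
  have each: "b i * m i powr (1-r) \<le> M * (r * (b i powr (1/r) / S) + (1-r) * (m i / \<tau>))" if i: "i \<in> I" for i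
  proof (cases "m i = 0")
    case True
    then show ?thesis using Mpos r bpos[OF i] Spos by simp
  next
    case False
    then have mp: "m i > 0" using mnn[OF i] by simp
    have Y: "(b i powr (1/r) / S) powr r * (m i / \<tau>) powr (1-r) \<le> r * (b i powr (1/r) / S) + (1-r) * (m i / \<tau>)"
      using Youngs_inequality_0[of r "1-r" "b i powr (1/r) / S" "m i / \<tau>"] r bpos[OF i] Spos mp tpos by simp
    have e: "(b i powr (1/r) / S) powr r * (m i / \<tau>) powr (1-r) = b i * m i powr (1-r) / M"
      unfolding M_def using r bpos[OF i] Spos by (simp add: powr_divide powr_powr)
    show ?thesis using Y Mpos unfolding e by (simp add: field_simps)
  qed
  have "(\<Sum>i\<in>I. b i * m i powr (1-r)) \<le> (\<Sum>i\<in>I. M * (r * (b i powr (1/r) / S) + (1-r) * (m i / \<tau>)))"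
    using each by (rule sum_mono)
  also have "\<dots> = M * (r * ((\<Sum>i\<in>I. b i powr (1/r)) / S) + (1-r) * ((\<Sum>i\<in>I. m i) / \<tau>))"
    by (simp add: sum_distrib_left sum.distrib sum_divide_distrib[symmetric] algebra_simps)
  also have "\<dots> = M" using Spos tpos msum unfolding S_def[symmetric] by simp
  finally show ?thesis unfolding M_def S_def .
qed


lemma cnt_ge1: "flcb_cnt sel t i \<ge> 1"
  by (induction t) auto

lemma sum_decomp:
  fixes h :: "nat \<Rightarrow> nat \<Rightarrow> real"
  assumes "\<forall>t\<in>{1..\<tau>}. sel t < K"
  shows "(\<Sum>t=1..\<tau>. h (sel t) (flcb_cnt sel (t-1) (sel t))) = (\<Sum>i<K. \<Sum>k=1..flcb_cnt sel \<tau> i - 1. h i k)"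
  using assms
proof (induction \<tau>)
  case 0 then show ?case by simp
next
  case (Suc \<tau>)
  define s where "s = sel (Suc \<tau>)"
  have sK: "s < K" using Suc.prems s_def by auto
  have IH: "(\<Sum>t=1..\<tau>. h (sel t) (flcb_cnt sel (t-1) (sel t))) = (\<Sum>i<K. \<Sum>k=1..flcb_cnt sel \<tau> i - 1. h i k)"
    using Suc by auto
  have L: "(\<Sum>t=1..Suc \<tau>. h (sel t) (flcb_cnt sel (t-1) (sel t))) = (\<Sum>t=1..\<tau>. h (sel t) (flcb_cnt sel (t-1) (sel t))) + h s (flcb_cnt sel \<tau> s)"
    by (simp add: s_def)
  have R: "(\<Sum>k=1..flcb_cnt sel (Suc \<tau>) i - 1. h i k) = (\<Sum>k=1..flcb_cnt sel \<tau> i - 1. h i k) + (if i = s then h i (flcb_cnt sel \<tau> i) else 0)" for i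
  proof (cases "i = s")
    case True
    have c1: "flcb_cnt sel \<tau> i \<ge> 1" by (rule cnt_ge1)
    have "flcb_cnt sel (Suc \<tau>) i - 1 = flcb_cnt sel \<tau> i" using True s_def by simp
    moreover have "flcb_cnt sel \<tau> i = Suc (flcb_cnt sel \<tau> i - 1)" using c1 by simp
    ultimately have "(\<Sum>k=1..flcb_cnt sel (Suc \<tau>) i - 1. h i k) = (\<Sum>k=1..Suc (flcb_cnt sel \<tau> i - 1). h i k)" by simp
    also have "\<dots> = (\<Sum>k=1..flcb_cnt sel \<tau> i - 1. h i k) + h i (Suc (flcb_cnt sel \<tau> i - 1))" by simp
    finally show ?thesis using True c1 by simp
  next
    case False then show ?thesis by (simp add: s_def)
  qed
  have "(\<Sum>i<K. \<Sum>k=1..flcb_cnt sel (Suc \<tau>) i - 1. h i k) = (\<Sum>i<K. \<Sum>k=1..flcb_cnt sel \<tau> i - 1. h i k) + (\<Sum>i<K. if i = s then h i (flcb_cnt sel \<tau> i) else 0)"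
    by (simp only: R sum.distrib)
  also have "(\<Sum>i<K. if i = s then h i (flcb_cnt sel \<tau> i) else 0) = h s (flcb_cnt sel \<tau> s)"
    using sK by simp
  finally show ?case using L IH by simp
qed

theorem theorem3:
  fixes r :: real
  assumes "r > 0"
  shows "\<exists>C::real. \<forall>(K::nat) (n::nat \<Rightarrow> nat) (f::nat \<Rightarrow> (nat \<Rightarrow> real) \<Rightarrow> real)
      (X::nat \<Rightarrow> (nat \<Rightarrow> real) set) (A::nat \<Rightarrow> ((nat \<Rightarrow> real) \<times> 'o) list \<Rightarrow> (nat \<Rightarrow> real))
      (Orc::nat \<Rightarrow> (nat \<Rightarrow> real) \<Rightarrow> 'o) (x0::nat \<Rightarrow> nat \<Rightarrow> real) (\<beta>::nat \<Rightarrow> real)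
      (T::nat) (sel::nat \<Rightarrow> nat).
      K \<ge> 1 \<and>
      (\<forall>i<K. convex_fun_Rn (Rn (n i)) (f i) \<and> X i \<subseteq> Rn (n i) \<and> convex_set_Rn (X i) \<and>
              \<beta> i > 0 \<and>
              g_bounded (f i) (X i) (\<lambda>k. \<beta> i / real k powr r) (alg_iter (A i) (Orc i) (x0 i))) \<and>
      flcb_run K f (\<lambda>i k. \<beta> i / real k powr r) (\<lambda>i. alg_iter (A i) (Orc i) (x0 i)) T sel
      \<longrightarrow> (\<forall>\<tau>\<in>{1..T}.
            flcb_regret K f X (\<lambda>i. alg_iter (A i) (Orc i) (x0 i)) sel \<tau>
            \<le> C * (if r < 1 then (\<Sum>i<K. \<beta> i powr (1 / r)) powr r * real \<tau> powr (1 - r)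
                   else if r = 1 then (\<Sum>i<K. \<beta> i) * (1 + ln (real \<tau>))
                   else (\<Sum>i<K. \<beta> i)))"
proof -
  define C where "C = (if r < 1 then 2/(1-r) else if r = 1 then 2 else 2*r/(r-1))"
  show ?thesis
  proof (rule exI[of _ C], intro allI impI ballI)
    fix K n f X A Orc x0 \<beta> T sel \<tau>
    assume H: "K \<ge> 1 \<and>
      (\<forall>i<K. convex_fun_Rn (Rn (n i)) (f i) \<and> X i \<subseteq> Rn (n i) \<and> convex_set_Rn (X i) \<and>
              \<beta> i > 0 \<and>
              g_bounded (f i) (X i) (\<lambda>k. \<beta> i / real k powr r) (alg_iter (A i) (Orc i) (x0 i))) \<and>
      flcb_run K f (\<lambda>i k. \<beta> i / real k powr r) (\<lambda>i. alg_iter (A i) (Orc i) (x0 i)) T sel"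
      and \<tau>: "\<tau> \<in> {1..T}"
    define x where "x = (\<lambda>i. alg_iter (A i) (Orc i) (x0 i))"
    define g where "g = (\<lambda>i k. \<beta> i / real k powr r)"
    have K1: "K \<ge> 1" using H by simp
    have bpos: "\<And>i. i < K \<Longrightarrow> \<beta> i > 0" using H by simp
    have gb: "\<And>i. i < K \<Longrightarrow> g_bounded (f i) (X i) (\<lambda>k. \<beta> i / real k powr r) (x i)"
      using H unfolding x_def by simp
    have run: "flcb_run K f g x T sel" using H unfolding x_def g_def by simp
    have selK: "\<forall>t\<in>{1..\<tau>}. sel t < K" using run \<tau> unfolding flcb_run_def by auto
    have amin: "\<And>t j. t \<in> {1..\<tau>} \<Longrightarrow> j < K \<Longrightarrow> flcb_lcb f g x sel (t-1) (sel t) \<le> flcb_lcb f g x sel (t-1) j"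
      using run \<tau> unfolding flcb_run_def by auto
    have setEq: "{Inf (f i ` X i) | i. i < K} = (\<lambda>i. Inf (f i ` X i)) ` {..<K}" by auto
    have "fstar K f X \<in> (\<lambda>i. Inf (f i ` X i)) ` {..<K}"
      unfolding fstar_def setEq using K1 by (intro Min_in) (auto simp: lessThan_empty_iff)
    then obtain j where j: "j < K" "fstar K f X = Inf (f j ` X j)" by auto
    obtain xs where xs: "xs \<in> X j" "\<forall>y\<in>X j. f j xs \<le> f j y"
        "\<forall>k\<ge>1. f j (x j k) - f j xs \<le> \<beta> j / real k powr r"
      using gb[OF j(1)] unfolding g_bounded_def by blast
    have fs: "fstar K f X = f j xs"
      unfolding j(2) using xs by (intro cInf_eq_minimum) auto
    have trm: "f (sel t) (x (sel t) (flcb_cnt sel t (sel t))) - fstar K f X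
        \<le> 2 * (\<beta> (sel t) / real (flcb_cnt sel (t-1) (sel t)) powr r)" if t: "t \<in> {1..\<tau>}" for t
    proof -
      define i where "i = sel t"
      define c where "c = flcb_cnt sel (t-1) i"
      have iK: "i < K" using selK t i_def by auto
      have c1: "c \<ge> 1" unfolding c_def by (rule cnt_ge1)
      have tS: "t = Suc (t-1)" using t by auto
      have si: "sel (Suc (t-1)) = i" using tS i_def by metis
      have "flcb_cnt sel (Suc (t-1)) i = c + 1"
        unfolding c_def using si by simp
      then have cS: "flcb_cnt sel t i = c + 1" using tS by metis
      have "flcb_lcb f g x sel (t-1) i \<le> flcb_lcb f g x sel (t-1) j"
        using amin[OF t j(1)] i_def by simp
      also have "\<dots> \<le> f j xs"
        using xs(3) cnt_ge1[of sel "t-1" j] unfolding flcb_lcb_def g_def by fastforce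
      finally have lcb: "f i (x i c) - \<beta> i / real c powr r \<le> fstar K f X"
        unfolding fs flcb_lcb_def g_def c_def by simp
      obtain xi where xi: "xi \<in> X i" "\<forall>y\<in>X i. f i xi \<le> f i y" "\<forall>k. x i k \<in> X i"
          "\<forall>k\<ge>1. f i (x i k) - f i xi \<le> \<beta> i / real k powr r"
        using gb[OF iK] unfolding g_bounded_def by blast
      have a1: "f i xi \<le> f i (x i c)" using xi by auto
      have a2: "f i (x i (c+1)) - f i xi \<le> \<beta> i / real (c+1) powr r" using xi(4) by auto
      have a3: "\<beta> i / real (c+1) powr r \<le> \<beta> i / real c powr r"
        using bpos[OF iK] c1 assms by (intro divide_left_mono powr_mono2) auto
      show ?thesis using lcb a1 a2 a3 cS unfolding i_def[symmetric] c_def[symmetric] by simp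
    qed
    define m where "m = (\<lambda>i. flcb_cnt sel \<tau> i - 1)"
    have "flcb_regret K f X x sel \<tau> \<le> (\<Sum>t=1..\<tau>. 2 * (\<beta> (sel t) / real (flcb_cnt sel (t-1) (sel t)) powr r))"
      unfolding flcb_regret_def using trm by (intro sum_mono) auto
    also have "\<dots> = 2 * (\<Sum>i<K. \<Sum>k=1..m i. \<beta> i / real k powr r)"
      unfolding sum_distrib_left[symmetric] m_def by (rule arg_cong[where f="\<lambda>z. 2 * z"], rule sum_decomp[OF selK])
    also have "\<dots> = 2 * (\<Sum>i<K. \<beta> i * Hr r (m i))"
      unfolding Hr_def by (simp add: sum_distrib_left)
    finally have reg: "flcb_regret K f X x sel \<tau> \<le> 2 * (\<Sum>i<K. \<beta> i * Hr r (m i))" .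
    have msum: "(\<Sum>i<K. real (m i)) = real \<tau>"
      using sum_decomp[OF selK, of "\<lambda>_ _. 1"] unfolding m_def by simp
    have mle: "real (m i) \<le> real \<tau>" if "i < K" for i
      unfolding msum[symmetric] using that by (intro member_le_sum) auto
    have tpos: "real \<tau> \<ge> 1" using \<tau> by simp
    have main: "2 * (\<Sum>i<K. \<beta> i * Hr r (m i)) \<le> C * (if r < 1 then (\<Sum>i<K. \<beta> i powr (1 / r)) powr r * real \<tau> powr (1 - r)
                   else if r = 1 then (\<Sum>i<K. \<beta> i) * (1 + ln (real \<tau>))
                   else (\<Sum>i<K. \<beta> i))"
    proof (cases "r < 1")
      case True
      have "(\<Sum>i<K. \<beta> i * Hr r (m i)) \<le> (\<Sum>i<K. \<beta> i * (real (m i) powr (1-r) / (1-r)))"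
        using Hr_lt1[OF assms True] bpos by (intro sum_mono mult_left_mono) (auto intro: less_imp_le)
      also have "\<dots> = (\<Sum>i<K. \<beta> i * real (m i) powr (1-r)) / (1-r)"
        by (simp add: sum_divide_distrib)
      also have "\<dots> \<le> ((\<Sum>i<K. \<beta> i powr (1 / r)) powr r * real \<tau> powr (1 - r)) / (1-r)"
        using True K1 tpos bpos msum
        by (intro divide_right_mono young_sum[OF assms True]) auto
      finally show ?thesis unfolding C_def using True by simp
    next
      case False
      show ?thesis
      proof (cases "r = 1")
        case True
        have "(\<Sum>i<K. \<beta> i * Hr r (m i)) \<le> (\<Sum>i<K. \<beta> i * (1 + ln (real \<tau>)))"
        proof (intro sum_mono mult_left_mono)
          fix i assume "i \<in> {..<K}"
          then have iK: "i < K" by simp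
          show "0 \<le> \<beta> i" using bpos[OF iK] by simp
          show "Hr r (m i) \<le> 1 + ln (real \<tau>)"
          proof (cases "m i = 0")
            case True then show ?thesis using tpos by (simp add: Hr_def)
          next
            case False
            then have "Hr 1 (m i) \<le> 1 + ln (real (m i))" by (intro Hr_1) auto
            also have "\<dots> \<le> 1 + ln (real \<tau>)" using mle[OF iK] False by simp
            finally show ?thesis using \<open>r = 1\<close> by simp
          qed
        qed
        then show ?thesis unfolding C_def using True by (simp add: sum_distrib_right)
      next
        case False
        then have r1: "r > 1" using \<open>\<not> r < 1\<close> by simp
        have "(\<Sum>i<K. \<beta> i * Hr r (m i)) \<le> (\<Sum>i<K. \<beta> i * (r/(r-1)))"
          using Hr_gt1[OF r1] bpos by (intro sum_mono mult_left_mono) (auto intro: less_imp_le)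
        also have "\<dots> = (\<Sum>i<K. \<beta> i) * (r/(r-1))" by (rule sum_distrib_right[symmetric])
        finally have "2 * (\<Sum>i<K. \<beta> i * Hr r (m i)) \<le> (2*r/(r-1)) * (\<Sum>i<K. \<beta> i)" using r1 by (simp add: field_simps)
        then show ?thesis unfolding C_def using r1 by simp
      qed
    qed
    show "flcb_regret K f X (\<lambda>i. alg_iter (A i) (Orc i) (x0 i)) sel \<tau>
            \<le> C * (if r < 1 then (\<Sum>i<K. \<beta> i powr (1 / r)) powr r * real \<tau> powr (1 - r)
                   else if r = 1 then (\<Sum>i<K. \<beta> i) * (1 + ln (real \<tau>))
                   else (\<Sum>i<K. \<beta> i))"
      using reg main unfolding x_def by linarith
  qed
qed

end
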